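(* Let $D$ be a digraph rooted at $r$, let $v \in V(D) \setminus \{r\}$, and let $L \subseteq D$ be $v$-large. Then for every $I \in \mathcal{G}_L(v)$ there is an $(r,v)$-path-system $\mathcal{P}$ in $L$ such that $\mathcal{P} \setminus \{rv\} \in \mathfrak{P}_D(v) \cap \mathfrak{P}_L(v)$ and $I \subseteq E^+(\mathcal{P})$, where $\mathcal{P} \setminus \{rv\}$ denotes $\mathcal{P}$ with the trivial one-edge path $rv$ removed (if it belongs to $\mathcal{P}$).
   Context: Digraphs have no loops or parallel edges; $H - rv$ denotes $H$ with the edge $rv$ deleted if present. $\mathrm{in}_H(v)$ is the set of edges of $H$ with head $v$. An $(x,y)$-path is a directed path from $x$ to $y$; an $(x,y)$-path-system is a set of pairwise internally disjoint $(x,y)$-paths. $E^+(\mathcal{P})$ is the set of terminal edges of the paths in $\mathcal{P}$. For a digraph $H$ rooted at $r$, $\mathcal{G}_H(v)$ is the set of all $I \subseteq \mathrm{in}_H(v)$ for which there is an $(r,v)$-path-system $\mathcal{P}$ in $H$ with $E^+(\mathcal{P}) = I$. For distinct $x,y$ with $xy \notin E$, an $(x,y)$-separation is a set $S \subseteq V\setminus\{x,y\}$ meeting every $(x,y)$-path. A set of paths $\mathcal{P}$ and a vertex set $S$ are orthogonal if each path of $\mathcal{P}$ meets $S$ in exactly one vertex and $S \subseteq \bigcup_{P\in\mathcal{P}}V(P)$. An $(x,y)$-path-system is Erdős–Menger if some $(x,y)$-separation is orthogonal to it. $\mathfrak{P}_H(v)$ is the set of Erdős–Menger $(r,v)$-path-systems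 in $H - rv$. A spanning subdigraph $L \subseteq D$ is $v$-large if some $\mathcal{P} \in \mathfrak{P}_D(v)$ has all its paths in $L$, and $rv \in E(L)$ whenever $rv \in E(D)$. *)

theory Defs
  imports Main
begin

text \<open>A digraph is a pair (V, E) of a (possibly infinite) vertex set and an edge
  relation. Since there are no parallel edges, an edge is just an ordered pair (tail, head).\<close>

type_synonym 'a digraph = "'a set \<times> ('a \<times> 'a) set"

abbreviation verts :: "'a digraph \<Rightarrow> 'a set" where "verts H \<equiv> fst H"
abbreviation arcs :: "'a digraph \<Rightarrow> ('a \<times> 'a) set" where "arcs H \<equiv> snd H"

definition digraph :: "'a digraph \<Rightarrow> bool" where
  "digraph H \<longleftrightarrow> arcs H \<subseteq> verts H \<times> verts H \<and> (\<forall>x. (x, x) \<notin> arcs H)"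

definition del_edge :: "'a digraph \<Rightarrow> 'a \<Rightarrow> 'a \<Rightarrow> 'a digraph" where
  "del_edge H r v = (verts H, arcs H - {(r, v)})"

definition in_edges :: "'a digraph \<Rightarrow> 'a \<Rightarrow> ('a \<times> 'a) set" where
  "in_edges H v = {e \<in> arcs H. snd e = v}"

definition spanning_sub :: "'a digraph \<Rightarrow> 'a digraph \<Rightarrow> bool" where
  "spanning_sub L D \<longleftrightarrow> verts L = verts D \<and> arcs L \<subseteq> arcs D"

definition is_path :: "'a digraph \<Rightarrow> 'a \<Rightarrow> 'a \<Rightarrow> 'a list \<Rightarrow> bool" where
  "is_path H x y P \<longleftrightarrow> x \<noteq> y \<and> P \<noteq> [] \<and> hd P = x \<and> last P = y \<and> distinct P
     \<and> set P \<subseteq> verts H \<and> (\<forall>i. Suc i < length P \<longrightarrow> (P ! i, P ! Suc i) \<in> arcs H)"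

definition path_system :: "'a digraph \<Rightarrow> 'a \<Rightarrow> 'a \<Rightarrow> 'a list set \<Rightarrow> bool" where
  "path_system H x y \<P> \<longleftrightarrow> (\<forall>P\<in>\<P>. is_path H x y P)
     \<and> (\<forall>P\<in>\<P>. \<forall>Q\<in>\<P>. P \<noteq> Q \<longrightarrow> set P \<inter> set Q \<subseteq> {x, y})"

definition last_edge :: "'a list \<Rightarrow> 'a \<times> 'a" where
  "last_edge P = (last (butlast P), last P)"

definition term_edges :: "'a list set \<Rightarrow> ('a \<times> 'a) set" where
  "term_edges \<P> = last_edge ` \<P>"

definition Gsets :: "'a digraph \<Rightarrow> 'a \<Rightarrow> 'a \<Rightarrow> ('a \<times> 'a) set set" where
  "Gsets H r v = {I. I \<subseteq> in_edges H v \<and> (\<exists>\<P>. path_system H r v \<P> \<and> term_edges \<P> = I)}"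

definition separation :: "'a digraph \<Rightarrow> 'a \<Rightarrow> 'a \<Rightarrow> 'a set \<Rightarrow> bool" where
  "separation H x y S \<longleftrightarrow> x \<noteq> y \<and> (x, y) \<notin> arcs H \<and> S \<subseteq> verts H - {x, y}
     \<and> (\<forall>P. is_path H x y P \<longrightarrow> set P \<inter> S \<noteq> {})"

definition orthogonal :: "'a list set \<Rightarrow> 'a set \<Rightarrow> bool" where
  "orthogonal \<P> S \<longleftrightarrow> (\<forall>P\<in>\<P>. \<exists>!s. s \<in> set P \<inter> S) \<and> S \<subseteq> (\<Union>P\<in>\<P>. set P)"

definition erdos_menger :: "'a digraph \<Rightarrow> 'a \<Rightarrow> 'a \<Rightarrow> 'a list set \<Rightarrow> bool" where
  "erdos_menger H x y \<P> \<longleftrightarrow> path_system H x y \<P> \<and> (\<exists>S. separation H x y S \<and> orthogonal \<P> S)"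

definition EM_sets :: "'a digraph \<Rightarrow> 'a \<Rightarrow> 'a \<Rightarrow> 'a list set set" where
  "EM_sets H r v = {\<P>. erdos_menger (del_edge H r v) r v \<P>}"

definition paths_in :: "'a digraph \<Rightarrow> 'a list set \<Rightarrow> bool" where
  "paths_in L \<P> \<longleftrightarrow> (\<forall>P\<in>\<P>. set P \<subseteq> verts L
     \<and> (\<forall>i. Suc i < length P \<longrightarrow> (P ! i, P ! Suc i) \<in> arcs L))"

definition v_large :: "'a digraph \<Rightarrow> 'a \<Rightarrow> 'a \<Rightarrow> 'a digraph \<Rightarrow> bool" where
  "v_large D r v L \<longleftrightarrow> spanning_sub L D
     \<and> (\<exists>\<P>\<in>EM_sets D r v. paths_in L \<P>)
     \<and> ((r, v) \<in> arcs D \<longrightarrow> (r, v) \<in> arcs L)"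

end

theory Submission
  imports Defs
begin

lemma is_path_mono:
  assumes "is_path H x y P" "verts H = verts G" "arcs H \<subseteq> arcs G"
  shows "is_path G x y P"
  using assms unfolding is_path_def by auto

lemma path_basic:
  assumes "is_path H x y p" "(x,y) \<notin> arcs H"
  shows "distinct p" "3 \<le> length p" "p!0 = x" "p!(length p - 1) = y"
    "\<And>i. i < length p \<Longrightarrow> p!i = x \<longleftrightarrow> i = 0"
    "\<And>i. i < length p \<Longrightarrow> p!i = y \<longleftrightarrow> i = length p - 1"
    "\<And>i. Suc i < length p \<Longrightarrow> (p!i, p!Suc i) \<in> arcs H"
    "set p \<subseteq> verts H" "x \<noteq> y"
proof -
  have d: "distinct p" "p \<noteq> []" "hd p = x" "last p = y" "x \<noteq> y" "set p \<subseteq> verts H"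
    and e: "\<And>i. Suc i < length p \<Longrightarrow> (p!i, p!Suc i) \<in> arcs H"
    using assms by (auto simp: is_path_def)
  show "distinct p" "set p \<subseteq> verts H" "x \<noteq> y" using d by auto
  show "\<And>i. Suc i < length p \<Longrightarrow> (p!i, p!Suc i) \<in> arcs H" by (rule e)
  show x0: "p!0 = x" using d by (simp add: hd_conv_nth)
  show xl: "p!(length p - 1) = y" using d by (simp add: last_conv_nth)
  have "length p \<noteq> 0" using d by simp
  moreover have "length p \<noteq> 1"
  proof
    assume "length p = 1" then have "p!0 = p!(length p - 1)" by simp
    with x0 xl d show False by simp
  qed
  moreover have "length p \<noteq> 2"
  proof
    assume l: "length p = 2"
    then have "(p!0, p!Suc 0) \<in> arcs H" using e by simp
    moreover have "p!Suc 0 = y" using xl l by simp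
    ultimately show False using x0 assms(2) by simp
  qed
  ultimately show "3 \<le> length p" by linarith
  show "\<And>i. i < length p \<Longrightarrow> p!i = x \<longleftrightarrow> i = 0"
    using x0 d nth_eq_iff_index_eq[of p] by (metis length_greater_0_conv)
  show "\<And>i. i < length p \<Longrightarrow> p!i = y \<longleftrightarrow> i = length p - 1"
    using xl d nth_eq_iff_index_eq[of p]
    by (metis diff_less length_greater_0_conv zero_less_one)
qed

definition idx :: "'a list \<Rightarrow> 'a \<Rightarrow> nat" where
  "idx xs x = (LEAST i. i < length xs \<and> xs!i = x)"

lemma idx_nth: "distinct xs \<Longrightarrow> i < length xs \<Longrightarrow> idx xs (xs!i) = i"
  unfolding idx_def
  by (rule Least_equality) (auto simp: nth_eq_iff_index_eq)

lemma last_edge_append: "2 \<le> length ys \<Longrightarrow> last_edge (xs @ ys) = last_edge ys"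
proof -
  assume a: "2 \<le> length ys"
  then have "butlast ys \<noteq> []" "ys \<noteq> []"
    by (auto simp flip: length_greater_0_conv) 
  then show ?thesis unfolding last_edge_def by (simp add: butlast_append)
qed

lemma last_edge_drop: "2 \<le> length (drop k q) \<Longrightarrow> last_edge (drop k q) = last_edge q"
  unfolding last_edge_def
  by (metis butlast_drop last_drop drop_eq_Nil  Suc_1 Suc_le_eq length_butlast
       length_drop less_Suc_eq_0_disj zero_less_diff not_less_eq_eq)

locale aug =
  fixes H G :: "'a digraph" and r v :: 'a and P0 Q :: "'a list set" and S :: "'a set"
  assumes vHG: "verts H = verts G" and aHG: "arcs H \<subseteq> arcs G"
    and P0: "path_system H r v P0" and Qs: "path_system H r v Q"
    and Ssep: "separation G r v S" and orth: "orthogonal P0 S"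
begin

lemma rv: "r \<noteq> v" "(r,v) \<notin> arcs G" "S \<subseteq> verts G - {r,v}" "r \<notin> S" "v \<notin> S"
  using Ssep by (auto simp: separation_def)

lemma rvH: "(r,v) \<notin> arcs H" using rv aHG by auto

lemma pathG: "is_path H r v P \<Longrightarrow> is_path G r v P" by (rule is_path_mono[OF _ vHG aHG])

lemma meetS: "is_path G r v P \<Longrightarrow> set P \<inter> S \<noteq> {}" using Ssep unfolding separation_def by blast

lemma P0p: "p \<in> P0 \<Longrightarrow> is_path H r v p" using P0 by (auto simp: path_system_def)
lemma Qp: "q \<in> Q \<Longrightarrow> is_path H r v q" using Qs by (auto simp: path_system_def)
lemma P0d: "p \<in> P0 \<Longrightarrow> p' \<in> P0 \<Longrightarrow> p \<noteq> p' \<Longrightarrow> x \<in> set p \<Longrightarrow> x \<in> set p' \<Longrightarrow> x = r \<or> x = v"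
proof -
  assume a: "p \<in> P0" "p' \<in> P0" "p \<noteq> p'" "x \<in> set p" "x \<in> set p'"
  have "set p \<inter> set p' \<subseteq> {r, v}" using P0 a(1-3) unfolding path_system_def by blast
  then show ?thesis using a(4,5) by blast
qed
lemma Qd: "p \<in> Q \<Longrightarrow> p' \<in> Q \<Longrightarrow> p \<noteq> p' \<Longrightarrow> x \<in> set p \<Longrightarrow> x \<in> set p' \<Longrightarrow> x = r \<or> x = v"
proof -
  assume a: "p \<in> Q" "p' \<in> Q" "p \<noteq> p'" "x \<in> set p" "x \<in> set p'"
  have "set p \<inter> set p' \<subseteq> {r, v}" using Qs a(1-3) unfolding path_system_def by blast
  then show ?thesis using a(4,5) by blast
qed

lemmas pb = path_basic[OF _ rvH]

definition sp where "sp p = (LEAST i. i < length p \<and> p!i \<in> S)"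
definition lq where "lq q = (GREATEST j. j < length q \<and> q!j \<in> S)"

lemma sp:
  assumes "p \<in> P0"
  shows "sp p < length p" "p!sp p \<in> S" "\<And>i. i < length p \<Longrightarrow> p!i \<in> S \<Longrightarrow> i = sp p"
    "0 < sp p" "sp p < length p - 1"
proof -
  have pp: "is_path H r v p" using P0p assms .
  have dp: "distinct p" by (rule pb(1)[OF pp])
  have ex1: "\<exists>!s. s \<in> set p \<inter> S" using orth assms unfolding orthogonal_def by simp
  then obtain s where s: "s \<in> set p \<inter> S" by auto
  have u: "\<And>t. t \<in> set p \<inter> S \<Longrightarrow> t = s" using ex1 s by auto
  from s obtain i where i: "i < length p" "p!i = s" by (auto simp: in_set_conv_nth)
  have uu: "i' = i" if h: "i' < length p" "p!i' \<in> S" for i'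
  proof -
    have "p!i' = s" using u h by simp
    then have "p!i' = p!i" using i by simp
    then show "i' = i" using nth_eq_iff_index_eq[OF dp h(1) i(1)] by simp
  qed
  have spi: "sp p = i" unfolding sp_def
  proof (rule Least_equality)
    show "i < length p \<and> p ! i \<in> S" using i s by simp
    show "\<And>y. y < length p \<and> p ! y \<in> S \<Longrightarrow> i \<le> y" using uu by fastforce
  qed
  show a1: "sp p < length p" using spi i by simp
  show a2: "p!sp p \<in> S" using spi i s by simp
  show "\<And>j. j < length p \<Longrightarrow> p!j \<in> S \<Longrightarrow> j = sp p" using uu spi by simp
  have "p!sp p \<noteq> r" using a2 rv(4) by auto
  then have "sp p \<noteq> 0" using pb(3)[OF pp] by (intro notI) simp
  then show "0 < sp p" by simp
  have "p!sp p \<noteq> v" using a2 rv(5) by auto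
  then have "sp p \<noteq> length p - 1" using pb(4)[OF pp] by (intro notI) simp
  then show "sp p < length p - 1" using a1 by linarith
qed

lemma lq:
  assumes "q \<in> Q"
  shows "lq q < length q" "q!lq q \<in> S" "\<And>j. j < length q \<Longrightarrow> q!j \<in> S \<Longrightarrow> j \<le> lq q"
    "0 < lq q" "lq q < length q - 1"
proof -
  have pp: "is_path H r v q" using Qp assms .
  have "set q \<inter> S \<noteq> {}" by (rule meetS[OF pathG[OF pp]])
  then obtain j where j: "j < length q" "q!j \<in> S"
    by (auto simp: in_set_conv_nth)
  have bnd: "\<And>y. y < length q \<and> q!y \<in> S \<Longrightarrow> y \<le> length q" by simp
  have g: "lq q < length q \<and> q!lq q \<in> S"
    unfolding lq_def by (rule GreatestI_nat[of "\<lambda>j. j < length q \<and> q!j \<in> S", OF _ bnd]) (use j in simp)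
  then show a1: "lq q < length q" and a2: "q!lq q \<in> S" by simp_all
  show "\<And>j. j < length q \<Longrightarrow> q!j \<in> S \<Longrightarrow> j \<le> lq q"
    unfolding lq_def by (rule Greatest_le_nat[of "\<lambda>j. j < length q \<and> q!j \<in> S", OF _ bnd]) simp
  have "q!lq q \<noteq> r" using a2 rv(4) by auto
  then have "lq q \<noteq> 0" using pb(3)[OF pp] by (intro notI) simp
  then show "0 < lq q" by simp
  have "q!lq q \<noteq> v" using a2 rv(5) by auto
  then have "lq q \<noteq> length q - 1" using pb(4)[OF pp] by (intro notI) simp
  then show "lq q < length q - 1" using a1 by linarith
qed

definition pm where "pm w = (SOME p. p \<in> P0 \<and> w \<in> set p)"
definition ip where "ip w = idx (pm w) w"
definition qm where "qm w = (SOME q. q \<in> Q \<and> w \<in> set q)"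
definition iq where "iq w = idx (qm w) w"

lemma pm_eq:
  assumes "p \<in> P0" "i < length p" "p!i \<noteq> r" "p!i \<noteq> v"
  shows "pm (p!i) = p" "ip (p!i) = i"
proof -
  have "\<exists>p'. p' \<in> P0 \<and> p!i \<in> set p'" using assms by auto
  then have s: "pm (p!i) \<in> P0 \<and> p!i \<in> set (pm (p!i))" unfolding pm_def by (rule someI_ex)
  show e: "pm (p!i) = p"
  proof (rule ccontr)
    assume "pm (p!i) \<noteq> p"
    then have "p!i = r \<or> p!i = v" using P0d[OF assms(1), of "pm (p!i)" "p!i"] s assms(2) by simp
    then show False using assms by simp
  qed
  show "ip (p!i) = i" unfolding ip_def e by (rule idx_nth[OF pb(1)[OF P0p[OF assms(1)]] assms(2)])
qed

lemma qm_eq: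
  assumes "q \<in> Q" "i < length q" "q!i \<noteq> r" "q!i \<noteq> v"
  shows "qm (q!i) = q" "iq (q!i) = i"
proof -
  have "\<exists>p'. p' \<in> Q \<and> q!i \<in> set p'" using assms by auto
  then have s: "qm (q!i) \<in> Q \<and> q!i \<in> set (qm (q!i))" unfolding qm_def by (rule someI_ex)
  show e: "qm (q!i) = q"
  proof (rule ccontr)
    assume "qm (q!i) \<noteq> q"
    then have "q!i = r \<or> q!i = v" using Qd[OF assms(1), of "qm (q!i)" "q!i"] s assms(2) by simp
    then show False using assms by simp
  qed
  show "iq (q!i) = i" unfolding iq_def e by (rule idx_nth[OF pb(1)[OF Qp[OF assms(1)]] assms(2)])
qed

definition EE where
  "EE = {w. w \<noteq> r \<and> w \<noteq> v \<and> (\<exists>p\<in>P0. \<exists>i<length p. sp p \<le> i \<and> p!i = w)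
           \<and> (\<exists>q\<in>Q. \<exists>j<length q. lq q \<le> j \<and> q!j = w)}"

lemma EE_D:
  assumes "w \<in> EE"
  shows "w \<noteq> r" "w \<noteq> v" "pm w \<in> P0" "ip w < length (pm w)" "pm w ! ip w = w" "sp (pm w) \<le> ip w"
    "qm w \<in> Q" "iq w < length (qm w)" "qm w ! iq w = w" "lq (qm w) \<le> iq w"
proof -
  have w: "w \<noteq> r" "w \<noteq> v" "\<exists>p\<in>P0. \<exists>i<length p. sp p \<le> i \<and> p!i = w"
     "\<exists>q\<in>Q. \<exists>j<length q. lq q \<le> j \<and> q!j = w" using assms unfolding EE_def by simp_all
  from w(3) obtain p i where a1: "p \<in> P0" "i < length p" "sp p \<le> i" "p!i = w" by auto
  from w(4) obtain q j where a2: "q \<in> Q" "j < length q" "lq q \<le> j" "q!j = w" by auto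
  note a = w(1,2) a1 a2
  show "w \<noteq> r" "w \<noteq> v" by fact+
  have "pm (p!i) = p" "ip (p!i) = i" using pm_eq[OF a(3,4)] a(1,2,6) by simp_all
  then have "pm w = p" "ip w = i" using a(6) by simp_all
  then show "pm w \<in> P0" "ip w < length (pm w)" "pm w ! ip w = w" "sp (pm w) \<le> ip w"
    using a by simp_all
  have "qm (q!j) = q" "iq (q!j) = j" using qm_eq[OF a(7,8)] a(1,2,10) by simp_all
  then have "qm w = q" "iq w = j" using a(10) by simp_all
  then show "qm w \<in> Q" "iq w < length (qm w)" "qm w ! iq w = w" "lq (qm w) \<le> iq w"
    using a by simp_all
qed

lemma EE_I:
  assumes "p \<in> P0" "i < length p" "sp p \<le> i" "q \<in> Q" "j < length q" "lq q \<le> j" "p!i = q!j"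
    "p!i \<noteq> r" "p!i \<noteq> v"
  shows "p!i \<in> EE"
proof -
  have "\<exists>p'\<in>P0. \<exists>i'<length p'. sp p' \<le> i' \<and> p'!i' = p!i" using assms(1-3) by auto
  moreover have "\<exists>q\<in>Q. \<exists>j<length q. lq q \<le> j \<and> q!j = p!i" using assms(4-7) by auto
  ultimately show ?thesis unfolding EE_def using assms(8,9) by simp
qed

definition RM where "RM X = {w\<in>X. \<exists>w'\<in>X. pm w' = pm w \<and> ip w' < ip w}"
definition RW where "RW X = {w\<in>X. \<exists>w'\<in>X. qm w' = qm w \<and> iq w < iq w'}"
definition Phi where "Phi A = EE - RW (EE - RM A)"

lemma mono_Phi: "mono Phi"
  unfolding mono_def Phi_def RM_def RW_def by blast

definition AA where "AA = lfp Phi"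
definition BB where "BB = EE - RM AA"
definition MM where "MM = AA \<inter> BB"

lemma AA_eq: "AA = EE - RW BB"
  using lfp_unfold[OF mono_Phi] unfolding AA_def BB_def Phi_def by simp

lemma MM_EE: "MM \<subseteq> EE" unfolding MM_def BB_def by auto

lemma EE_eqI: "w1 \<in> EE \<Longrightarrow> w2 \<in> EE \<Longrightarrow> pm w1 = pm w2 \<Longrightarrow> ip w1 = ip w2 \<Longrightarrow> w1 = w2"
  using EE_D(5) by metis

lemma EE_eqI': "w1 \<in> EE \<Longrightarrow> w2 \<in> EE \<Longrightarrow> qm w1 = qm w2 \<Longrightarrow> iq w1 = iq w2 \<Longrightarrow> w1 = w2"
  using EE_D(9) by metis

lemma MM_man: assumes "w1 \<in> MM" "w2 \<in> MM" "pm w1 = pm w2" shows "w1 = w2"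
proof -
  have "\<not> ip w1 < ip w2" using assms unfolding MM_def BB_def RM_def by auto
  moreover have "\<not> ip w2 < ip w1" using assms unfolding MM_def BB_def RM_def by auto
  ultimately have "ip w1 = ip w2" by linarith
  then show ?thesis using EE_eqI[of w1 w2] assms MM_EE by auto
qed

lemma MM_woman: assumes "w1 \<in> MM" "w2 \<in> MM" "qm w1 = qm w2" shows "w1 = w2"
proof -
  have "\<not> iq w1 < iq w2" using assms AA_eq unfolding MM_def RW_def by auto
  moreover have "\<not> iq w2 < iq w1" using assms AA_eq unfolding MM_def RW_def by auto
  ultimately have "iq w1 = iq w2" by linarith
  then show ?thesis using EE_eqI'[of w1 w2] assms MM_EE by auto
qed

lemma MM_stable:
  assumes "w \<in> EE" "w \<notin> MM"
  shows "(\<exists>w'\<in>MM. pm w' = pm w \<and> ip w' < ip w) \<or> (\<exists>w'\<in>MM. qm w' = qm w \<and> iq w < iq w')"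
proof (cases "w \<in> BB")
  case False
  then have "w \<in> RM AA" using assms unfolding BB_def by auto
  then obtain w1 where w1: "w1 \<in> AA" "pm w1 = pm w" "ip w1 < ip w" unfolding RM_def by auto
  obtain w0 where w0: "w0 \<in> AA \<and> pm w0 = pm w \<and> ip w0 < ip w"
    and mn: "\<And>y. y \<in> AA \<and> pm y = pm w \<and> ip y < ip w \<Longrightarrow> ip w0 \<le> ip y"
    using ex_has_least_nat[of "\<lambda>y. y \<in> AA \<and> pm y = pm w \<and> ip y < ip w" w1 ip] w1 by blast
  have "w0 \<notin> RM AA"
  proof
    assume "w0 \<in> RM AA"
    then obtain y where "y \<in> AA" "pm y = pm w0" "ip y < ip w0" unfolding RM_def by auto
    with w0 mn[of y] show False by auto
  qed
  moreover have "AA \<subseteq> EE" using AA_eq by auto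
  ultimately have "w0 \<in> MM" using w0 unfolding MM_def BB_def by auto
  then show ?thesis using w0 by auto
next
  case True
  then have "w \<notin> AA" using assms unfolding MM_def by auto
  then have "w \<in> RW BB" using assms AA_eq by auto
  then obtain w1 where w1: "w1 \<in> BB" "qm w1 = qm w" "iq w < iq w1" unfolding RW_def by auto
  define N where "N = length (qm w)"
  obtain w0 where w0: "w0 \<in> BB \<and> qm w0 = qm w \<and> iq w < iq w0"
    and mn: "\<And>y. y \<in> BB \<and> qm y = qm w \<and> iq w < iq y \<Longrightarrow> N - iq w0 \<le> N - iq y"
    using ex_has_least_nat[of "\<lambda>y. y \<in> BB \<and> qm y = qm w \<and> iq w < iq y" w1 "\<lambda>y. N - iq y"] w1
    by blast
  have BE: "BB \<subseteq> EE" unfolding BB_def by auto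
  have "w0 \<notin> RW BB"
  proof
    assume "w0 \<in> RW BB"
    then obtain y where y: "y \<in> BB" "qm y = qm w0" "iq w0 < iq y" unfolding RW_def by auto
    with w0 mn[of y] have "N - iq w0 \<le> N - iq y" by auto
    moreover have "iq y < N" using EE_D(8)[of y] y BE w0 unfolding N_def by auto
    ultimately show False using y by linarith
  qed
  then have "w0 \<in> MM" using w0 AA_eq BE unfolding MM_def by auto
  then show ?thesis using w0 by auto
qed

end

lemma in_take_nth: "x \<in> set (take a p) \<longleftrightarrow> (\<exists>k. k < a \<and> k < length p \<and> p!k = x)"
  by (auto simp: in_set_conv_nth)

lemma in_drop_nth: "x \<in> set (drop b q) \<longleftrightarrow> (\<exists>k. b \<le> k \<and> k < length q \<and> q!k = x)"
proof
  assume "x \<in> set (drop b q)"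
  then obtain m where "m < length (drop b q)" "drop b q ! m = x" by (auto simp: in_set_conv_nth)
  then show "\<exists>k. b \<le> k \<and> k < length q \<and> q!k = x" by (intro exI[of _ "b + m"]) auto
next
  assume "\<exists>k. b \<le> k \<and> k < length q \<and> q!k = x"
  then obtain k where k: "b \<le> k" "k < length q" "q!k = x" by blast
  then have "drop b q ! (k - b) = x" "k - b < length (drop b q)" by auto
  then show "x \<in> set (drop b q)" using nth_mem[of "k - b" "drop b q"] by simp
qed

lemma splice_path:
  assumes p: "is_path H x y p" and q: "is_path H x y q" and ab: "0 < a" "a < length p" "b < length q"
    and eq: "p!a = q!b" and dj: "set (take a p) \<inter> set (drop b q) = {}"
  shows "is_path H x y (take a p @ drop b q)"
proof -
  let ?W = "take a p @ drop b q"
  have pd: "x \<noteq> y" "p \<noteq> []" "hd p = x" "last p = y" "distinct p" "set p \<subseteq> verts H"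
    "\<And>i. Suc i < length p \<Longrightarrow> (p!i, p!Suc i) \<in> arcs H" using p unfolding is_path_def by auto
  have qd: "q \<noteq> []" "hd q = x" "last q = y" "distinct q" "set q \<subseteq> verts H"
    "\<And>i. Suc i < length q \<Longrightarrow> (q!i, q!Suc i) \<in> arcs H" using q unfolding is_path_def by auto
  have lt: "length (take a p) = a" using ab by simp
  have ne: "drop b q \<noteq> []" using ab by simp
  have "?W \<noteq> []" using ab by simp
  moreover have "hd ?W = x" using ab pd by (simp add: hd_append)
  moreover have "last ?W = y" using ne qd by (simp add: last_drop)
  moreover have "distinct ?W" using pd qd dj by simp
  moreover have "set ?W \<subseteq> verts H"
    using pd(6) qd(5) set_take_subset[of a p] set_drop_subset[of b q] by auto
  moreover have "(?W!k, ?W!Suc k) \<in> arcs H" if k: "Suc k < length ?W" for k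
  proof -
    have lw: "length ?W = a + (length q - b)" using ab by simp
    consider "Suc k < a" | "Suc k = a" | "a \<le> k" by linarith
    then show ?thesis
    proof cases
      case 1
      then have "?W!k = p!k" "?W!Suc k = p!Suc k" using ab by (simp_all add: nth_append)
      then show ?thesis using pd(7)[of k] 1 ab by simp
    next
      case 2
      then have "?W!k = p!k" using ab by (simp add: nth_append)
      moreover have "?W!Suc k = q!b" using 2 ab by (simp add: nth_append)
      ultimately show ?thesis using pd(7)[of k] 2 ab eq by simp
    next
      case 3
      then have "?W!k = q!(b + (k - a))" "?W!Suc k = q!Suc (b + (k - a))" using ab
        by (simp_all add: nth_append Suc_diff_le)
      moreover have "Suc (b + (k - a)) < length q" using k lw 3 by linarith
      ultimately show ?thesis using qd(6) by simp
    qed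
  qed
  ultimately show ?thesis using pd(1) unfolding is_path_def by blast
qed

context aug
begin

lemma FT:
  assumes p: "p \<in> P0" and q: "q \<in> Q" and i: "i \<le> sp p" and j: "lq q \<le> j" "j < length q"
    and eq: "p!i = q!j"
  shows "i = sp p \<and> j = lq q"
proof (rule ccontr)
  assume nc: "\<not> (i = sp p \<and> j = lq q)"
  have pp: "is_path H r v p" using P0p p .
  have qq: "is_path H r v q" using Qp q .
  have ilen: "i < length p" using i sp(1)[OF p] by linarith
  have ni: "i \<noteq> sp p"
  proof
    assume h: "i = sp p"
    then have "q!j \<in> S" using sp(2)[OF p] eq by simp
    then have "j \<le> lq q" using lq(3)[OF q j(2)] by simp
    then show False using nc h j by simp
  qed
  have nj: "j \<noteq> lq q"
  proof
    assume "j = lq q"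
    then have "p!i \<in> S" using lq(2)[OF q] eq by simp
    then have "i = sp p" using sp(3)[OF p ilen] by simp
    then show False using ni by simp
  qed
  have ilt: "i < sp p" using i ni by simp
  have jgt: "lq q < j" using j nj by simp
  define K where "K = {i'. i' < sp p \<and> (\<exists>j'. lq q < j' \<and> j' < length q \<and> q!j' = p!i')}"
  have iK: "i \<in> K" using ilt jgt j eq unfolding K_def by auto
  obtain i0 where i0: "i0 \<in> K" and mn: "\<And>y. y \<in> K \<Longrightarrow> i0 \<le> y"
    using ex_has_least_nat[of "\<lambda>x. x \<in> K" i "\<lambda>x. x"] iK by auto
  from i0 obtain j0 where i0': "i0 < sp p" "lq q < j0" "j0 < length q" "q!j0 = p!i0"
    unfolding K_def by auto
  have i0len: "i0 < length p" using i0' sp(1)[OF p] by linarith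
  have "i0 \<noteq> 0"
  proof
    assume "i0 = 0"
    then have "q!j0 = r" using i0' pb(3)[OF pp] by simp
    then have "j0 = 0" using pb(5)[OF qq i0'(3)] by simp
    then show False using i0' by simp
  qed
  then have i0pos: "0 < i0" by simp
  have dj: "set (take i0 p) \<inter> set (drop j0 q) = {}"
  proof (rule ccontr)
    assume "set (take i0 p) \<inter> set (drop j0 q) \<noteq> {}"
    then obtain x where "x \<in> set (take i0 p)" "x \<in> set (drop j0 q)" by blast
    then obtain k m where km: "k < i0" "k < length p" "p!k = x" "j0 \<le> m" "m < length q" "q!m = x"
      unfolding in_take_nth in_drop_nth by blast
    then have "k \<in> K" using i0' unfolding K_def by (intro CollectI conjI exI[of _ m]) auto
    then show False using mn[of k] km by simp
  qed
  have W: "is_path H r v (take i0 p @ drop j0 q)"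
    by (rule splice_path[OF pp qq i0pos i0len i0'(3)]) (use i0' dj in auto)
  have "set (take i0 p @ drop j0 q) \<inter> S \<noteq> {}" by (rule meetS[OF pathG[OF W]])
  then obtain x where x: "x \<in> S" "x \<in> set (take i0 p) \<or> x \<in> set (drop j0 q)" by auto
  from x(2) show False
  proof
    assume "x \<in> set (take i0 p)"
    then obtain k where "k < i0" "k < length p" "p!k = x" unfolding in_take_nth by blast
    then show False using sp(3)[OF p, of k] x i0' by auto
  next
    assume "x \<in> set (drop j0 q)"
    then obtain k where "j0 \<le> k" "k < length q" "q!k = x" unfolding in_drop_nth by blast
    then show False using lq(3)[OF q, of k] x i0' by auto
  qed
qed

end

context aug
begin

definition newp where
  "newp p = (if \<exists>w\<in>MM. pm w = p then
     (let w = SOME w. w \<in> MM \<and> pm w = p in take (ip w) p @ drop (iq w) (qm w)) else p)"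

lemma newp_m: assumes "w \<in> MM" shows "newp (pm w) = take (ip w) (pm w) @ drop (iq w) (qm w)"
proof -
  have "\<exists>w'. w' \<in> MM \<and> pm w' = pm w" using assms by blast
  then have s: "(SOME w'. w' \<in> MM \<and> pm w' = pm w) \<in> MM \<and> pm (SOME w'. w' \<in> MM \<and> pm w' = pm w) = pm w"
    by (rule someI_ex)
  then have "(SOME w'. w' \<in> MM \<and> pm w' = pm w) = w" using MM_man assms by blast
  then show ?thesis unfolding newp_def using assms by auto
qed

lemma newp_u: "\<not> (\<exists>w\<in>MM. pm w = p) \<Longrightarrow> newp p = p"
  unfolding newp_def by simp

lemma MM_D: assumes "w \<in> MM"
  shows "w \<noteq> r" "w \<noteq> v" "pm w \<in> P0" "ip w < length (pm w)" "pm w ! ip w = w" "sp (pm w) \<le> ip w"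
    "qm w \<in> Q" "iq w < length (qm w)" "qm w ! iq w = w" "lq (qm w) \<le> iq w"
    "0 < ip w" "ip w < length (pm w) - 1" "iq w < length (qm w) - 1"
proof -
  have e: "w \<in> EE" using assms MM_EE by auto
  show "w \<noteq> r" "w \<noteq> v" "pm w \<in> P0" "ip w < length (pm w)" "pm w ! ip w = w" "sp (pm w) \<le> ip w"
    "qm w \<in> Q" "iq w < length (qm w)" "qm w ! iq w = w" "lq (qm w) \<le> iq w" using EE_D[OF e] by auto
  show "0 < ip w" using sp(4)[OF EE_D(3)[OF e]] EE_D(6)[OF e] by linarith
  have "ip w \<noteq> length (pm w) - 1" using pb(4)[OF P0p[OF EE_D(3)[OF e]]] EE_D(2,5)[OF e] by auto
  then show "ip w < length (pm w) - 1" using EE_D(4)[OF e] by linarith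
  have "iq w \<noteq> length (qm w) - 1" using pb(4)[OF Qp[OF EE_D(7)[OF e]]] EE_D(2,9)[OF e] by auto
  then show "iq w < length (qm w) - 1" using EE_D(8)[OF e] by linarith
qed

definition frontp where
  "frontp p x \<longleftrightarrow> (\<exists>k<length p. p!k = x \<and> (\<forall>w\<in>MM. pm w = p \<longrightarrow> k < ip w))"
definition backp where
  "backp p x \<longleftrightarrow> (\<exists>w\<in>MM. pm w = p \<and> (\<exists>m. iq w \<le> m \<and> m < length (qm w) \<and> qm w ! m = x))"

lemma newp_cases: assumes "p \<in> P0" "x \<in> set (newp p)" shows "frontp p x \<or> backp p x"
proof (cases "\<exists>w\<in>MM. pm w = p")
  case True
  then obtain w where w: "w \<in> MM" "pm w = p" by blast
  then have nw: "newp p = take (ip w) p @ drop (iq w) (qm w)" using newp_m by blast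
  show ?thesis
  proof (cases "x \<in> set (take (ip w) p)")
    case True
    then obtain k where k: "k < ip w" "k < length p" "p!k = x" unfolding in_take_nth by blast
    have "\<forall>w'\<in>MM. pm w' = p \<longrightarrow> k < ip w'" using MM_man w k by blast
    then show ?thesis using k unfolding frontp_def by blast
  next
    case False
    then have "x \<in> set (drop (iq w) (qm w))" using assms nw by simp
    then show ?thesis using w unfolding backp_def in_drop_nth by blast
  qed
next
  case False
  then have "x \<in> set p" using assms newp_u by simp
  then obtain k where "k < length p" "p!k = x" by (auto simp: in_set_conv_nth)
  then show ?thesis using False unfolding frontp_def by blast
qed

lemma cross:
  assumes p1: "p1 \<in> P0" and p2: "p2 \<in> P0" and ne: "p1 \<noteq> p2" and f: "frontp p1 x" and b: "backp p2 x"
  shows "x = r \<or> x = v"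
proof (rule ccontr)
  assume nx: "\<not> (x = r \<or> x = v)"
  from f obtain k where k: "k < length p1" "p1!k = x" and kk: "\<And>w. w\<in>MM \<Longrightarrow> pm w = p1 \<Longrightarrow> k < ip w"
    unfolding frontp_def by blast
  from b obtain w2 m where w2: "w2 \<in> MM" "pm w2 = p2" "iq w2 \<le> m" "m < length (qm w2)" "qm w2 ! m = x"
    unfolding backp_def by blast
  define q2 where "q2 = qm w2"
  have q2: "q2 \<in> Q" using MM_D(7)[OF w2(1)] q2_def by simp
  have m: "lq q2 \<le> m" using MM_D(10)[OF w2(1)] w2(3) q2_def by simp
  show False
  proof (cases "k \<le> sp p1")
    case True
    have "k = sp p1 \<and> m = lq q2" by (rule FT[OF p1 q2 True m]) (use w2 k q2_def in auto)
    then have "m = iq w2" using w2(3) MM_D(10)[OF w2(1)] q2_def by simp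
    then have "x = w2" using w2 MM_D(9)[OF w2(1)] by simp
    then have "x \<in> set p2" using MM_D(4,5)[OF w2(1)] w2(2) nth_mem by metis
    moreover have "x \<in> set p1" using k nth_mem by metis
    ultimately show False using P0d[OF p1 p2 ne] nx by blast
  next
    case False
    have xE: "x \<in> EE" using EE_I[OF p1 k(1) _ q2 w2(4)[folded q2_def] m] k w2(5) nx False q2_def by auto
    have pmx: "pm x = p1" "ip x = k" using pm_eq[OF p1 k(1)] k nx by auto
    have qmx: "qm x = q2" "iq x = m" using qm_eq[OF q2, of m] w2 nx q2_def by auto
    have "x \<notin> MM"
    proof
      assume "x \<in> MM"
      then have "x = w2" using MM_woman w2(1) qmx q2_def by blast
      then show False using pmx w2(2) ne by simp
    qed
    then have "(\<exists>w'\<in>MM. pm w' = pm x \<and> ip w' < ip x) \<or> (\<exists>w'\<in>MM. qm w' = qm x \<and> iq x < iq w')"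
      using MM_stable xE by blast
    then show False
    proof
      assume "\<exists>w'\<in>MM. pm w' = pm x \<and> ip w' < ip x"
      then obtain w' where "w' \<in> MM" "pm w' = p1" "ip w' < k" using pmx by auto
      then show False using kk by fastforce
    next
      assume "\<exists>w'\<in>MM. qm w' = qm x \<and> iq x < iq w'"
      then obtain w' where w': "w' \<in> MM" "qm w' = q2" "m < iq w'" using qmx by auto
      then have "w' = w2" using MM_woman w2(1) q2_def by blast
      then show False using w' w2(3) by simp
    qed
  qed
qed

lemma newp_disj:
  assumes p1: "p1 \<in> P0" and p2: "p2 \<in> P0" and ne: "p1 \<noteq> p2"
    and x1: "x \<in> set (newp p1)" and x2: "x \<in> set (newp p2)"
  shows "x = r \<or> x = v"
proof -
  have c1: "frontp p1 x \<or> backp p1 x" by (rule newp_cases[OF p1 x1])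
  have c2: "frontp p2 x \<or> backp p2 x" by (rule newp_cases[OF p2 x2])
  show ?thesis
  proof (cases "frontp p1 x")
    case f1: True
    show ?thesis
    proof (cases "frontp p2 x")
      case True
      from f1 obtain k1 where "k1 < length p1" "p1!k1 = x" unfolding frontp_def by blast
      moreover from True obtain k2 where "k2 < length p2" "p2!k2 = x" unfolding frontp_def by blast
      ultimately have "x \<in> set p1" "x \<in> set p2" by (metis nth_mem)+
      then show ?thesis using P0d[OF p1 p2 ne] by blast
    next
      case False
      then show ?thesis using cross[OF p1 p2 ne f1] c2 by blast
    qed
  next
    case nf1: False
    then have b1: "backp p1 x" using c1 by blast
    show ?thesis
    proof (cases "frontp p2 x")
      case True
      then show ?thesis using cross[OF p2 p1 _ True b1] ne by blast
    next
      case False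
      then have b2: "backp p2 x" using c2 by blast
      from b1 obtain w1 m1 where w1: "w1 \<in> MM" "pm w1 = p1" "m1 < length (qm w1)" "qm w1 ! m1 = x"
        unfolding backp_def by blast
      from b2 obtain w2 m2 where w2: "w2 \<in> MM" "pm w2 = p2" "m2 < length (qm w2)" "qm w2 ! m2 = x"
        unfolding backp_def by blast
      have "qm w1 \<noteq> qm w2"
      proof
        assume "qm w1 = qm w2"
        then have "w1 = w2" using MM_woman w1(1) w2(1) by blast
        then show False using w1 w2 ne by simp
      qed
      moreover have "x \<in> set (qm w1)" "x \<in> set (qm w2)" using w1(3,4) w2(3,4) by (metis nth_mem)+
      ultimately show ?thesis using Qd[OF MM_D(7)[OF w1(1)] MM_D(7)[OF w2(1)]] by blast
    qed
  qed
qed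

end

context aug
begin

lemma newp_path:
  assumes p: "p \<in> P0"
  shows "is_path H r v (newp p)" "set (newp p) \<inter> S = {p ! sp p}"
proof -
  have pp: "is_path H r v p" using P0p p .
  have spS: "set p \<inter> S = {p ! sp p}"
  proof
    show "set p \<inter> S \<subseteq> {p ! sp p}"
    proof
      fix x assume "x \<in> set p \<inter> S"
      then obtain k where "k < length p" "p!k = x" "x \<in> S" by (auto simp: in_set_conv_nth)
      then show "x \<in> {p ! sp p}" using sp(3)[OF p] by auto
    qed
    show "{p ! sp p} \<subseteq> set p \<inter> S" using sp(1,2)[OF p] by simp
  qed
  have "is_path H r v (newp p) \<and> set (newp p) \<inter> S = {p ! sp p}"
  proof (cases "\<exists>w\<in>MM. pm w = p")
    case False
    then show ?thesis using newp_u pp spS by simp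
  next
    case True
    then obtain w where w: "w \<in> MM" "pm w = p" by blast
    define a where "a = ip w"
    define b where "b = iq w"
    define q where "q = qm w"
    have nw: "newp p = take a p @ drop b q" using newp_m[OF w(1)] w(2) a_def b_def q_def by simp
    have q: "q \<in> Q" using MM_D(7)[OF w(1)] q_def by simp
    have qq: "is_path H r v q" using Qp q .
    have a: "0 < a" "a < length p" "a < length p - 1" "p!a = w" "sp p \<le> a"
      using MM_D[OF w(1)] w(2) a_def by auto
    have b: "b < length q" "q!b = w" "lq q \<le> b"
      using MM_D[OF w(1)] b_def q_def by auto
    have dj: "set (take a p) \<inter> set (drop b q) = {}"
    proof (rule ccontr)
      assume "set (take a p) \<inter> set (drop b q) \<noteq> {}"
      then obtain x where "x \<in> set (take a p)" "x \<in> set (drop b q)" by blast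
      then obtain k m where km: "k < a" "k < length p" "p!k = x" "b \<le> m" "m < length q" "q!m = x"
        unfolding in_take_nth in_drop_nth by blast
      have dp: "distinct p" by (rule pb(1)[OF pp])
      show False
      proof (cases "k \<le> sp p")
        case True
        have "k = sp p \<and> m = lq q" by (rule FT[OF p q True]) (use km b in auto)
        then have "m = b" using km b by simp
        then have "p!k = p!a" using km a b by simp
        then show False using nth_eq_iff_index_eq[OF dp km(2) a(2)] km by simp
      next
        case False
        have xr: "x \<noteq> r" using pb(5)[OF pp km(2)] km False by auto
        have xv: "x \<noteq> v" using pb(6)[OF pp km(2)] km a by auto
        have xE: "x \<in> EE" using EE_I[OF p km(2) _ q km(5)] km b False xr xv by auto
        have pmx: "pm x = p" "ip x = k" using pm_eq[OF p km(2)] km xr xv by auto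
        have qmx: "qm x = q" "iq x = m" using qm_eq[OF q km(5)] km xr xv by auto
        have "x \<notin> MM"
        proof
          assume "x \<in> MM"
          then have "x = w" using MM_man w pmx by blast
          then have "p!k = p!a" using km a by simp
          then show False using nth_eq_iff_index_eq[OF dp km(2) a(2)] km by simp
        qed
        then have "(\<exists>w'\<in>MM. pm w' = pm x \<and> ip w' < ip x) \<or> (\<exists>w'\<in>MM. qm w' = qm x \<and> iq x < iq w')"
          using MM_stable xE by blast
        then show False
        proof
          assume "\<exists>w'\<in>MM. pm w' = pm x \<and> ip w' < ip x"
          then obtain w' where w': "w' \<in> MM" "pm w' = p" "ip w' < k" using pmx by auto
          then have "w' = w" using MM_man w by blast
          then show False using w' km a_def by simp
        next
          assume "\<exists>w'\<in>MM. qm w' = qm x \<and> iq x < iq w'"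
          then obtain w' where w': "w' \<in> MM" "qm w' = q" "m < iq w'" using qmx by auto
          then have "w' = w" using MM_woman w q_def by blast
          then show False using w' km b_def by simp
        qed
      qed
    qed
    have path: "is_path H r v (newp p)" unfolding nw
      by (rule splice_path[OF pp qq a(1) a(2) b(1)]) (use a b dj in auto)
    have "set (newp p) \<inter> S = {p ! sp p}"
    proof
      show "set (newp p) \<inter> S \<subseteq> {p ! sp p}"
      proof
        fix x assume x: "x \<in> set (newp p) \<inter> S"
        then have "x \<in> set (take a p) \<or> x \<in> set (drop b q)" using nw by simp
        then show "x \<in> {p ! sp p}"
        proof
          assume "x \<in> set (take a p)"
          then obtain k where "k < a" "k < length p" "p!k = x" unfolding in_take_nth by blast
          then show ?thesis using sp(3)[OF p, of k] x by auto
        next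
          assume "x \<in> set (drop b q)"
          then obtain m where m: "b \<le> m" "m < length q" "q!m = x" unfolding in_drop_nth by blast
          then have "m \<le> lq q" using lq(3)[OF q m(2)] x by auto
          then have "m = b" using m b by simp
          then have "x = p!a" using m a b by simp
          then have "a = sp p" using sp(3)[OF p a(2)] x by auto
          then show ?thesis using \<open>x = p!a\<close> by simp
        qed
      qed
      show "{p ! sp p} \<subseteq> set (newp p) \<inter> S"
      proof -
        have "p ! sp p \<in> set (newp p)"
        proof (cases "sp p < a")
          case True
          then have "p ! sp p \<in> set (take a p)" unfolding in_take_nth using sp(1)[OF p] by blast
          then show ?thesis using nw by simp
        next
          case False
          then have "sp p = a" using a by simp
          then have "p ! sp p = q ! b" using a b by simp
          moreover have "q ! b \<in> set (drop b q)" unfolding in_drop_nth using b by blast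
          ultimately show ?thesis using nw by simp
        qed
        then show ?thesis using sp(2)[OF p] by simp
      qed
    qed
    then show ?thesis using path by simp
  qed
  then show "is_path H r v (newp p)" "set (newp p) \<inter> S = {p ! sp p}" by simp_all
qed

lemma Q_matched:
  assumes q: "q \<in> Q" shows "\<exists>w\<in>MM. qm w = q"
proof -
  define c where "c = q ! lq q"
  have cS: "c \<in> S" using lq(2)[OF q] c_def by simp
  then obtain p where p: "p \<in> P0" "c \<in> set p" using orth unfolding orthogonal_def by blast
  then obtain k where k: "k < length p" "p!k = c" by (auto simp: in_set_conv_nth)
  then have ks: "k = sp p" using sp(3)[OF p(1) k(1)] cS by simp
  have cr: "c \<noteq> r" "c \<noteq> v" using cS rv by auto
  have cE: "c \<in> EE" using EE_I[OF p(1) k(1) _ q lq(1)[OF q]] ks k c_def cr by auto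
  have pmc: "pm c = p" "ip c = sp p" using pm_eq[OF p(1) k(1)] k ks cr by auto
  have qmc: "qm c = q" using qm_eq[OF q lq(1)[OF q]] c_def cr by auto
  show ?thesis
  proof (cases "c \<in> MM")
    case True then show ?thesis using qmc by blast
  next
    case False
    then have "(\<exists>w'\<in>MM. pm w' = pm c \<and> ip w' < ip c) \<or> (\<exists>w'\<in>MM. qm w' = qm c \<and> iq c < iq w')"
      using MM_stable cE by blast
    then show ?thesis
    proof
      assume "\<exists>w'\<in>MM. pm w' = pm c \<and> ip w' < ip c"
      then obtain w' where w': "w' \<in> MM" "pm w' = p" "ip w' < sp p" using pmc by auto
      then show ?thesis using MM_D(6)[OF w'(1)] by simp
    next
      assume "\<exists>w'\<in>MM. qm w' = qm c \<and> iq c < iq w'"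
      then show ?thesis using qmc by blast
    qed
  qed
qed

theorem aug_main: "\<exists>P. path_system H r v P \<and> orthogonal P S \<and> term_edges Q \<subseteq> term_edges P"
proof (intro exI conjI)
  let ?P = "newp ` P0"
  show "path_system H r v ?P"
    unfolding path_system_def
  proof (intro conjI ballI impI)
    fix P assume "P \<in> ?P" then show "is_path H r v P" using newp_path by blast
  next
    fix P1 P2 assume "P1 \<in> ?P" "P2 \<in> ?P" "P1 \<noteq> P2"
    then obtain p1 p2 where "p1 \<in> P0" "p2 \<in> P0" "P1 = newp p1" "P2 = newp p2" "p1 \<noteq> p2" by blast
    then show "set P1 \<inter> set P2 \<subseteq> {r, v}" using newp_disj by blast
  qed
  show "orthogonal ?P S"
    unfolding orthogonal_def
  proof (intro conjI ballI subsetI)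
    fix P assume "P \<in> ?P"
    then obtain p where "p \<in> P0" "P = newp p" by blast
    then have "set P \<inter> S = {p ! sp p}" using newp_path by blast
    then show "\<exists>!s. s \<in> set P \<inter> S" by auto
  next
    fix s assume s: "s \<in> S"
    then obtain p where p: "p \<in> P0" "s \<in> set p" using orth unfolding orthogonal_def by blast
    then obtain k where "k < length p" "p!k = s" by (auto simp: in_set_conv_nth)
    then have "s = p ! sp p" using sp(3)[OF p(1)] s by auto
    then have "s \<in> set (newp p)" using newp_path(2)[OF p(1)] by auto
    then show "s \<in> (\<Union>P\<in>?P. set P)" using p by blast
  qed
  show "term_edges Q \<subseteq> term_edges ?P"
  proof
    fix e assume "e \<in> term_edges Q"
    then obtain q where q: "q \<in> Q" "e = last_edge q" unfolding term_edges_def by blast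
    obtain w where w: "w \<in> MM" "qm w = q" using Q_matched[OF q(1)] by blast
    have nw: "newp (pm w) = take (ip w) (pm w) @ drop (iq w) q" using newp_m[OF w(1)] w by simp
    have l: "2 \<le> length (drop (iq w) q)" using MM_D(13)[OF w(1)] w by simp
    have "last_edge (newp (pm w)) = last_edge q"
      unfolding nw last_edge_append[OF l] last_edge_drop[OF l] ..
    moreover have "newp (pm w) \<in> ?P" using MM_D(3)[OF w(1)] by blast
    ultimately show "e \<in> term_edges ?P" unfolding term_edges_def using q
      by (metis image_eqI)
  qed
qed

end

lemma path_del:
  assumes "is_path H x y P" "P \<noteq> [x, y]"
  shows "is_path (del_edge H x y) x y P"
proof -
  have d: "x \<noteq> y" "P \<noteq> []" "hd P = x" "last P = y" "distinct P" "set P \<subseteq> verts H"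
    and e: "\<And>i. Suc i < length P \<Longrightarrow> (P!i, P!Suc i) \<in> arcs H"
    using assms(1) unfolding is_path_def by auto
  have "(P!i, P!Suc i) \<noteq> (x, y)" if i: "Suc i < length P" for i
  proof
    assume eq: "(P!i, P!Suc i) = (x, y)"
    have p0: "P!0 = x" using d by (simp add: hd_conv_nth)
    have pl: "P!(length P - 1) = y" using d by (simp add: last_conv_nth)
    have i1: "i < length P" "0 < length P" "length P - 1 < length P" using i by auto
    have "P!i = P!0" using eq p0 by simp
    then have "i = 0" using nth_eq_iff_index_eq[OF d(5) i1(1) i1(2)] by simp
    moreover have "P!Suc i = P!(length P - 1)" using eq pl by simp
    then have "Suc i = length P - 1" using nth_eq_iff_index_eq[OF d(5) i i1(3)] by simp
    ultimately have l: "length P = 2" by simp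
    then obtain a b where "P = [a, b]"
      by (metis One_nat_def Suc_1 length_0_conv length_Suc_conv)
    then show False using assms(2) p0 pl by simp
  qed
  then show ?thesis using assms(1) unfolding is_path_def del_edge_def by auto
qed

theorem corollary2p6:
  fixes D L :: "'a digraph" and r v :: 'a
  assumes "digraph D"
    and "r \<in> verts D"
    and "v \<in> verts D - {r}"
    and "v_large D r v L"
  shows "\<forall>I \<in> Gsets L r v. \<exists>\<P>. path_system L r v \<P>
           \<and> \<P> - {[r, v]} \<in> EM_sets D r v \<inter> EM_sets L r v
           \<and> I \<subseteq> term_edges \<P>"
proof
  fix I assume "I \<in> Gsets L r v"
  then obtain Q where Q: "path_system L r v Q" "term_edges Q = I"
    unfolding Gsets_def by blast
  from assms(4) obtain P0 where sub: "spanning_sub L D" and P0: "P0 \<in> EM_sets D r v"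
    and P0L: "paths_in L P0"
    unfolding v_large_def by blast
  define H where "H = del_edge L r v"
  define G where "G = del_edge D r v"
  have vHG: "verts H = verts G" and aHG: "arcs H \<subseteq> arcs G"
    using sub unfolding H_def G_def del_edge_def spanning_sub_def by auto
  have vLH: "verts H = verts L" and aLH: "arcs H \<subseteq> arcs L"
    unfolding H_def del_edge_def by auto
  from P0 obtain S where P0G: "path_system G r v P0" and Ssep: "separation G r v S"
    and orth: "orthogonal P0 S"
    unfolding EM_sets_def erdos_menger_def G_def by blast
  have rvG: "(r, v) \<notin> arcs G" unfolding G_def del_edge_def by simp
  have rvH: "(r, v) \<notin> arcs H" unfolding H_def del_edge_def by simp
  have P0H: "path_system H r v P0"
    unfolding path_system_def
  proof (intro conjI ballI impI)
    fix p assume p: "p \<in> P0"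
    then have pG: "is_path G r v p" using P0G unfolding path_system_def by blast
    have pL: "set p \<subseteq> verts L" "\<And>i. Suc i < length p \<Longrightarrow> (p!i, p!Suc i) \<in> arcs L"
      using P0L p unfolding paths_in_def by auto
    have "(p!i, p!Suc i) \<in> arcs H" if "Suc i < length p" for i
    proof -
      have "(p!i, p!Suc i) \<in> arcs G" using pG that unfolding is_path_def by blast
      then have "(p!i, p!Suc i) \<noteq> (r, v)" using rvG by auto
      then show ?thesis using pL(2)[OF that] unfolding H_def del_edge_def by simp
    qed
    then show "is_path H r v p" using pG pL vHG unfolding is_path_def by auto
  next
    fix p p' assume "p \<in> P0" "p' \<in> P0" "p \<noteq> p'"
    then show "set p \<inter> set p' \<subseteq> {r, v}" using P0G unfolding path_system_def by blast
  qed
  define Q' where "Q' = Q - {[r, v]}"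
  have Q'H: "path_system H r v Q'"
    unfolding path_system_def
  proof (intro conjI ballI impI)
    fix q assume "q \<in> Q'"
    then have "q \<in> Q" "q \<noteq> [r, v]" unfolding Q'_def by auto
    then have "is_path L r v q" using Q(1) unfolding path_system_def by blast
    then show "is_path H r v q" unfolding H_def by (rule path_del) fact
  next
    fix p p' assume "p \<in> Q'" "p' \<in> Q'" "p \<noteq> p'"
    then show "set p \<inter> set p' \<subseteq> {r, v}" using Q(1) unfolding path_system_def Q'_def by blast
  qed
  interpret aug H G r v P0 Q' S
    by unfold_locales (fact vHG aHG P0H Q'H Ssep orth)+
  obtain P' where P': "path_system H r v P'" "orthogonal P' S" "term_edges Q' \<subseteq> term_edges P'"
    using aug_main by blast
  define P where "P = P' \<union> (Q \<inter> {[r, v]})"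
  have P'L: "is_path L r v p" if "p \<in> P'" for p
  proof -
    have "is_path H r v p" using P'(1) that unfolding path_system_def by blast
    then show ?thesis by (rule is_path_mono[OF _ vLH aLH])
  qed
  have P'G: "is_path G r v p" if "p \<in> P'" for p
  proof -
    have "is_path H r v p" using P'(1) that unfolding path_system_def by blast
    then show ?thesis by (rule is_path_mono[OF _ vHG aHG])
  qed
  have nrv: "[r, v] \<notin> P'"
  proof
    assume "[r, v] \<in> P'"
    then have "is_path H r v [r, v]" using P'(1) unfolding path_system_def by blast
    then have "3 \<le> length [r, v]" by (rule path_basic(2)[OF _ rvH])
    then show False by simp
  qed
  have "path_system L r v P"
    unfolding path_system_def
  proof (intro conjI ballI impI)
    fix p assume "p \<in> P"
    then show "is_path L r v p" using P'L Q(1) unfolding P_def path_system_def by blast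
  next
    fix p p' assume a: "p \<in> P" "p' \<in> P" "p \<noteq> p'"
    show "set p \<inter> set p' \<subseteq> {r, v}"
    proof (cases "p = [r, v] \<or> p' = [r, v]")
      case True then show ?thesis by auto
    next
      case False
      then have "p \<in> P'" "p' \<in> P'" using a unfolding P_def by auto
      then show ?thesis using P'(1) a(3) unfolding path_system_def by blast
    qed
  qed
  moreover have PP': "P - {[r, v]} = P'" unfolding P_def using nrv by auto
  moreover have "P' \<in> EM_sets D r v"
  proof -
    have "path_system G r v P'"
      using P'(1) P'G unfolding path_system_def by blast
    then show ?thesis unfolding EM_sets_def erdos_menger_def G_def[symmetric]
      using Ssep P'(2) by blast
  qed
  moreover have "P' \<in> EM_sets L r v"
  proof -
    have "separation H r v S"
      unfolding separation_def
    proof (intro conjI allI impI)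
      show "r \<noteq> v" "(r, v) \<notin> arcs H" using Ssep rvH unfolding separation_def by auto
      show "S \<subseteq> verts H - {r, v}" using Ssep vHG unfolding separation_def by auto
      fix p assume "is_path H r v p"
      then have "is_path G r v p" by (rule is_path_mono[OF _ vHG aHG])
      then show "set p \<inter> S \<noteq> {}" using Ssep unfolding separation_def by blast
    qed
    then show ?thesis unfolding EM_sets_def erdos_menger_def H_def[symmetric]
      using P'(1,2) by blast
  qed
  moreover have "I \<subseteq> term_edges P"
  proof
    fix e assume "e \<in> I"
    then obtain q where q: "q \<in> Q" "e = last_edge q" using Q(2) unfolding term_edges_def by blast
    show "e \<in> term_edges P"
    proof (cases "q = [r, v]")
      case True
      then have "q \<in> P" using q unfolding P_def by simp
      then show ?thesis using q unfolding term_edges_def by blast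
    next
      case False
      then have "e \<in> term_edges Q'" using q unfolding term_edges_def Q'_def by blast
      then have "e \<in> term_edges P'" using P'(3) by blast
      then show ?thesis unfolding P_def term_edges_def by blast
    qed
  qed
  ultimately show "\<exists>\<P>. path_system L r v \<P>
           \<and> \<P> - {[r, v]} \<in> EM_sets D r v \<inter> EM_sets L r v
           \<and> I \<subseteq> term_edges \<P>" by (intro exI[of _ P]) simp
qed

end
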